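(* Let $P$ be a finite $(3+1)$-free poset, $(A_1,A_2)$ a pair of chains of $P$, $H$ an unbalanced ladder of $(A_1,A_2)$, and $(A'_1,A'_2)$ the pair obtained by the ladder swap on $H$. Then $\mathbf u_{A_1}\mathbf u_{A_2}\equiv\mathbf u_{A'_1}\mathbf u_{A'_2}\pmod{I^P_H}$.
   Context: $a<_Pb$: strict order; $a\sim_Pb$: incomparable or equal. $\mathcal{U}_P=\mathbb{Z}\langle u_a:a\in P\rangle$. For a chain $C=\{c_k>_P\cdots>_Pc_1\}$, $\mathbf u_C=u_{c_k}\cdots u_{c_1}$. $I^P_H$ is the two-sided ideal generated by $u_cu_a-u_au_c$ ($a<_Pc$) and $u_cu_au_b-u_bu_cu_a$ ($a\sim_Pb$, $b\sim_Pc$, $a<_Pc$). A ladder of $(A_1,A_2)$ is a connected component of the bipartite graph on $A_1\sqcup A_2$ with edges $x$—$y$ ($x\in A_1,y\in A_2$) when $x\sim_Py$; it is unbalanced if $|H\cap A_1|\ne|H\cap A_2|$. The ladder swap on $H$ gives $A'_1=(A_1\setminus H)\cup(H\cap A_2)$ and $A'_2=(A_2\setminus H)\cup(H\cap A_1)$, which are again chains. *)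

theory Defs
  imports Main "HOL-Library.Poly_Mapping"
begin

text \<open>The finite poset P is the (finite) type 'a with its order; P = UNIV.\<close>

definition sim :: "'a::order \<Rightarrow> 'a \<Rightarrow> bool" where
  "sim a b \<longleftrightarrow> \<not> a < b \<and> \<not> b < a"

definition incomp :: "'a::order \<Rightarrow> 'a \<Rightarrow> bool" where
  "incomp a b \<longleftrightarrow> \<not> a \<le> b \<and> \<not> b \<le> a"

definition three_one_free :: "'a::order itself \<Rightarrow> bool" where
  "three_one_free TYPE('a) \<longleftrightarrow>
     \<not> (\<exists>a b c d :: 'a. a < b \<and> b < c \<and> incomp d a \<and> incomp d b \<and> incomp d c)"

definition is_chain :: "'a::order set \<Rightarrow> bool" where
  "is_chain C \<longleftrightarrow> (\<forall>x\<in>C. \<forall>y\<in>C. x \<le> y \<or> y \<le> x)"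

text \<open>Elements of the free associative algebra Z<u_a : a in P>: finitely supported
  integer functions on words.\<close>
type_synonym 'a ncpoly = "'a list \<Rightarrow>\<^sub>0 int"

definition mon :: "'a list \<Rightarrow> 'a ncpoly" where
  "mon w = Poly_Mapping.single w 1"

definition ncmult :: "'a ncpoly \<Rightarrow> 'a ncpoly \<Rightarrow> 'a ncpoly" where
  "ncmult p q = (\<Sum>v\<in>Poly_Mapping.keys p. \<Sum>w\<in>Poly_Mapping.keys q.
       Poly_Mapping.single (v @ w) (Poly_Mapping.lookup p v * Poly_Mapping.lookup q w))"

inductive_set nc_ideal :: "'a ncpoly set \<Rightarrow> 'a ncpoly set" for G where
  zero: "0 \<in> nc_ideal G"
| gen: "g \<in> G \<Longrightarrow> ncmult l (ncmult g r) \<in> nc_ideal G"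
| add: "x \<in> nc_ideal G \<Longrightarrow> y \<in> nc_ideal G \<Longrightarrow> x + y \<in> nc_ideal G"

definition IPH_gens :: "'a::order ncpoly set" where
  "IPH_gens =
     {ncmult (mon [c]) (mon [a]) - ncmult (mon [a]) (mon [c]) | a c. a < c} \<union>
     {ncmult (mon [c]) (ncmult (mon [a]) (mon [b])) - ncmult (mon [b]) (ncmult (mon [c]) (mon [a]))
       | a b c. sim a b \<and> sim b c \<and> a < c}"

definition IPH :: "'a::order ncpoly set" where
  "IPH = nc_ideal IPH_gens"

text \<open>u_C = u_{c_k} ... u_{c_1} for the chain c_k > ... > c_1.\<close>
definition chain_word :: "'a::order set \<Rightarrow> 'a list" where
  "chain_word C = (THE w. set w = C \<and> sorted_wrt (\<lambda>x y. y < x) w)"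

definition uC :: "'a::order set \<Rightarrow> 'a ncpoly" where
  "uC C = mon (chain_word C)"

definition ladder_edges :: "'a::order set \<Rightarrow> 'a set \<Rightarrow> ('a + 'a) rel" where
  "ladder_edges A1 A2 =
     {(Inl x, Inr y) | x y. x \<in> A1 \<and> y \<in> A2 \<and> sim x y} \<union>
     {(Inr y, Inl x) | x y. x \<in> A1 \<and> y \<in> A2 \<and> sim x y}"

definition is_ladder :: "'a::order set \<Rightarrow> 'a set \<Rightarrow> ('a + 'a) set \<Rightarrow> bool" where
  "is_ladder A1 A2 H \<longleftrightarrow>
     (\<exists>v \<in> A1 <+> A2. H = {w \<in> A1 <+> A2. (v, w) \<in> (ladder_edges A1 A2)\<^sup>*})"

definition left_part :: "('a + 'a) set \<Rightarrow> 'a set" where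
  "left_part H = {x. Inl x \<in> H}"

definition right_part :: "('a + 'a) set \<Rightarrow> 'a set" where
  "right_part H = {y. Inr y \<in> H}"

definition unbalanced :: "('a + 'a) set \<Rightarrow> bool" where
  "unbalanced H \<longleftrightarrow> card (left_part H) \<noteq> card (right_part H)"

definition swap1 :: "'a set \<Rightarrow> 'a set \<Rightarrow> ('a + 'a) set \<Rightarrow> 'a set" where
  "swap1 A1 A2 H = (A1 - left_part H) \<union> right_part H"

definition swap2 :: "'a set \<Rightarrow> 'a set \<Rightarrow> ('a + 'a) set \<Rightarrow> 'a set" where
  "swap2 A1 A2 H = (A2 - right_part H) \<union> left_part H"

end

theory Submission
  imports Defs
begin


lemma ncmult_superset:
  assumes "finite K1" "Poly_Mapping.keys p \<subseteq> K1" "finite K2" "Poly_Mapping.keys q \<subseteq> K2"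
  shows "ncmult p q = (\<Sum>v\<in>K1. \<Sum>w\<in>K2. Poly_Mapping.single (v @ w) (Poly_Mapping.lookup p v * Poly_Mapping.lookup q w))"
proof -
  have "ncmult p q = (\<Sum>v\<in>Poly_Mapping.keys p. \<Sum>w\<in>K2. Poly_Mapping.single (v @ w) (Poly_Mapping.lookup p v * Poly_Mapping.lookup q w))"
    unfolding ncmult_def
    by (intro sum.cong refl sum.mono_neutral_left assms) (auto simp: in_keys_iff)
  also have "\<dots> = (\<Sum>v\<in>K1. \<Sum>w\<in>K2. Poly_Mapping.single (v @ w) (Poly_Mapping.lookup p v * Poly_Mapping.lookup q w))"
    by (intro sum.mono_neutral_left assms) (auto simp: in_keys_iff)
  finally show ?thesis .
qed

lemma ncmult_add_left: "ncmult (p + p') q = ncmult p q + ncmult p' q"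
proof -
  let ?K = "Poly_Mapping.keys p \<union> Poly_Mapping.keys p'"
  have "ncmult (p + p') q = (\<Sum>v\<in>?K. \<Sum>w\<in>Poly_Mapping.keys q. Poly_Mapping.single (v @ w) (Poly_Mapping.lookup (p+p') v * Poly_Mapping.lookup q w))"
    by (rule ncmult_superset) (simp_all add: keys_add)
  also have "\<dots> = (\<Sum>v\<in>?K. \<Sum>w\<in>Poly_Mapping.keys q. Poly_Mapping.single (v @ w) (Poly_Mapping.lookup p v * Poly_Mapping.lookup q w))
     + (\<Sum>v\<in>?K. \<Sum>w\<in>Poly_Mapping.keys q. Poly_Mapping.single (v @ w) (Poly_Mapping.lookup p' v * Poly_Mapping.lookup q w))"
    by (simp add: lookup_add distrib_right single_add sum.distrib)
  also have "\<dots> = ncmult p q + ncmult p' q"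
    by (simp add: ncmult_superset[of "Poly_Mapping.keys p \<union> Poly_Mapping.keys p'" p "Poly_Mapping.keys q" q] ncmult_superset[of "Poly_Mapping.keys p \<union> Poly_Mapping.keys p'" p' "Poly_Mapping.keys q" q])
  finally show ?thesis .
qed

lemma ncmult_add_right: "ncmult p (q + q') = ncmult p q + ncmult p q'"
proof -
  let ?K = "Poly_Mapping.keys q \<union> Poly_Mapping.keys q'"
  have "ncmult p (q + q') = (\<Sum>v\<in>Poly_Mapping.keys p. \<Sum>w\<in>?K. Poly_Mapping.single (v @ w) (Poly_Mapping.lookup p v * Poly_Mapping.lookup (q+q') w))"
    by (rule ncmult_superset) (simp_all add: keys_add)
  also have "\<dots> = (\<Sum>v\<in>Poly_Mapping.keys p. \<Sum>w\<in>?K. Poly_Mapping.single (v @ w) (Poly_Mapping.lookup p v * Poly_Mapping.lookup q w))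
     + (\<Sum>v\<in>Poly_Mapping.keys p. \<Sum>w\<in>?K. Poly_Mapping.single (v @ w) (Poly_Mapping.lookup p v * Poly_Mapping.lookup q' w))"
    by (simp add: lookup_add distrib_left single_add sum.distrib)
  also have "\<dots> = ncmult p q + ncmult p q'"
    by (simp add: ncmult_superset[of "Poly_Mapping.keys p" p "Poly_Mapping.keys q \<union> Poly_Mapping.keys q'" q] ncmult_superset[of "Poly_Mapping.keys p" p "Poly_Mapping.keys q \<union> Poly_Mapping.keys q'" q'])
  finally show ?thesis .
qed

lemma ncmult_uminus_left: "ncmult (- p) q = - ncmult p q"
  unfolding ncmult_def by (simp add: single_uminus sum_negf)

lemma ncmult_uminus_right: "ncmult p (- q) = - ncmult p q"
  unfolding ncmult_def by (simp add: single_uminus sum_negf)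

lemma ncmult_diff_left: "ncmult (p - p') q = ncmult p q - ncmult p' q"
  using ncmult_add_left[of p "-p'" q] by (simp add: ncmult_uminus_left)

lemma ncmult_diff_right: "ncmult p (q - q') = ncmult p q - ncmult p q'"
  using ncmult_add_right[of p q "-q'"] by (simp add: ncmult_uminus_right)

lemma ncmult_mon: "ncmult (mon u) (mon v) = mon (u @ v)"
  unfolding ncmult_def mon_def by simp

lemma nc_ideal_uminus: "x \<in> nc_ideal G \<Longrightarrow> - x \<in> nc_ideal G"
proof (induction rule: nc_ideal.induct)
  case zero then show ?case by (simp add: nc_ideal.zero)
next
  case (gen g l r)
  then show ?case using nc_ideal.gen[of g G "-l" r] by (simp add: ncmult_uminus_left)
next
  case (add x y)
  then show ?case using nc_ideal.add[of "-x" G "-y"] by simp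
qed

definition step :: "'a::order list \<Rightarrow> 'a list \<Rightarrow> bool" where
  "step u v \<longleftrightarrow>
     (\<exists>l r a c. a < c \<and> u = l @ [c,a] @ r \<and> v = l @ [a,c] @ r) \<or>
     (\<exists>l r a b c. sim a b \<and> sim b c \<and> a < c \<and> u = l @ [c,a,b] @ r \<and> v = l @ [b,c,a] @ r)"

definition wcong :: "'a::order list \<Rightarrow> 'a list \<Rightarrow> bool" where
  "wcong = (symclp step)\<^sup>*\<^sup>*"

lemma wcong_refl: "wcong u u"
  unfolding wcong_def by simp

lemma wcong_trans: "wcong u v \<Longrightarrow> wcong v w \<Longrightarrow> wcong u w"
  unfolding wcong_def by (rule rtranclp_trans)

lemma wcong_sym: "wcong u v \<Longrightarrow> wcong v u"
  unfolding wcong_def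
  by (rule rtranclp_symclp_sym)

lemma step_app: "step u v \<Longrightarrow> step (p @ u @ q) (p @ v @ q)"
  unfolding step_def
  apply (elim disjE exE conjE)
   apply (rule disjI1)
   apply (rule_tac x="p @ l" in exI, rule_tac x="r @ q" in exI, force)
  apply (rule disjI2)
  apply (rule_tac x="p @ l" in exI, rule_tac x="r @ q" in exI, force)
  done

lemma wcong_app: "wcong u v \<Longrightarrow> wcong (p @ u @ q) (p @ v @ q)"
  unfolding wcong_def
proof (induction rule: rtranclp_induct)
  case base then show ?case by simp
next
  case (step y z)
  then have "symclp step (p @ y @ q) (p @ z @ q)"
    by (auto simp: symclp_def intro: step_app)
  with step.IH show ?case by (rule rtranclp.rtrancl_into_rtrancl)
qed

lemma wcong_step: "step u v \<Longrightarrow> wcong u v"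
  unfolding wcong_def by (simp add: r_into_rtranclp symclp_def)

lemma gen_in: "g \<in> IPH_gens \<Longrightarrow> ncmult (mon l) (ncmult g (mon r)) \<in> IPH"
  unfolding IPH_def by (rule nc_ideal.gen)

lemma step_IPH: "step u v \<Longrightarrow> mon u - mon v \<in> IPH"
  unfolding step_def
proof (elim disjE exE conjE)
  fix l r a c assume h: "(a::'a) < c" "u = l @ [c, a] @ r" "v = l @ [a, c] @ r"
  let ?g = "ncmult (mon [c]) (mon [a]) - ncmult (mon [a]) (mon [c])"
  have "?g \<in> IPH_gens" unfolding IPH_gens_def using h(1) by blast
  then have "ncmult (mon l) (ncmult ?g (mon r)) \<in> IPH" by (rule gen_in)
  moreover have "ncmult (mon l) (ncmult ?g (mon r)) = mon u - mon v"
    using h by (simp add: ncmult_diff_left ncmult_diff_right ncmult_mon)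
  ultimately show ?thesis by simp
next
  fix l r a b c assume h: "sim (a::'a) b" "sim b c" "a < c" "u = l @ [c, a, b] @ r" "v = l @ [b, c, a] @ r"
  let ?g = "ncmult (mon [c]) (ncmult (mon [a]) (mon [b])) - ncmult (mon [b]) (ncmult (mon [c]) (mon [a]))"
  have "?g \<in> IPH_gens" unfolding IPH_gens_def using h(1-3) by blast
  then have "ncmult (mon l) (ncmult ?g (mon r)) \<in> IPH" by (rule gen_in)
  moreover have "ncmult (mon l) (ncmult ?g (mon r)) = mon u - mon v"
    using h by (simp add: ncmult_diff_left ncmult_diff_right ncmult_mon)
  ultimately show ?thesis by simp
qed

lemma wcong_IPH: "wcong u v \<Longrightarrow> mon u - mon v \<in> IPH"
  unfolding wcong_def
proof (induction rule: rtranclp_induct)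
  case base then show ?case by (simp add: IPH_def nc_ideal.zero)
next
  case (step y z)
  have "mon y - mon z \<in> IPH"
  proof (cases "step y z")
    case True then show ?thesis by (rule step_IPH)
  next
    case False
    then have "step z y" using step.hyps(2) by (auto simp: symclp_def)
    then have "mon z - mon y \<in> IPH" by (rule step_IPH)
    then show ?thesis using nc_ideal_uminus[of "mon z - mon y" IPH_gens] by (simp add: IPH_def)
  qed
  then have "(mon u - mon y) + (mon y - mon z) \<in> IPH"
    using step.IH unfolding IPH_def by (rule nc_ideal.add[rotated])
  then show ?case by simp
qed




definition scmp :: "'a::order \<Rightarrow> 'a \<Rightarrow> bool" where
  "scmp x y \<longleftrightarrow> x < y \<or> y < x"

lemmas wcong_trans' [trans] = wcong_trans

lemma wcong_swap2: "scmp x z \<Longrightarrow> wcong [x,z] [z,x]"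
proof -
  assume "scmp x z"
  then consider "z < x" | "x < z" unfolding scmp_def by blast
  then show ?thesis
  proof cases
    case 1
    then have "z < x \<and> [x,z] = [] @ [x,z] @ [] \<and> [z,x] = [] @ [z,x] @ []" by simp
    then have "step [x,z] [z,x]" unfolding step_def by blast
    then show ?thesis by (rule wcong_step)
  next
    case 2
    then have "x < z \<and> [z,x] = [] @ [z,x] @ [] \<and> [x,z] = [] @ [x,z] @ []" by simp
    then have "step [z,x] [x,z]" unfolding step_def by blast
    then show ?thesis by (rule wcong_sym[OF wcong_step])
  qed
qed

lemma wcong_pass: "(\<forall>z\<in>set v. scmp x z) \<Longrightarrow> wcong (x # v) (v @ [x])"
proof (induction v)
  case Nil then show ?case by (simp add: wcong_refl)
next
  case (Cons z v)
  have "wcong [x,z] [z,x]" using Cons.prems by (intro wcong_swap2) auto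
  from wcong_app[OF this, of "[]" v] have "wcong (x # z # v) (z # x # v)" by simp
  also have "wcong (x # v) (v @ [x])" using Cons by auto
  from wcong_app[OF this, of "[z]" "[]"] have "wcong (z # x # v) (z # v @ [x])" by simp
  finally show ?case by simp
qed

lemma wcong_rel: "sim a x \<Longrightarrow> sim x c \<Longrightarrow> a < c \<Longrightarrow> wcong [x,c,a] [c,a,x]"
proof -
  assume h: "sim a x" "sim x c" "a < c"
  then have "sim a x \<and> sim x c \<and> a < c \<and> [c,a,x] = [] @ [c,a,x] @ [] \<and> [x,c,a] = [] @ [x,c,a] @ []" by simp
  then have "step [c,a,x] [x,c,a]" unfolding step_def by blast
  then show ?thesis by (rule wcong_sym[OF wcong_step])
qed

lemma wcong_move:
  assumes "\<forall>z\<in>set P \<union> set S. scmp x z" "sim a x" "sim x c" "a < c"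
  shows "wcong (x # P @ [c,a] @ S) (P @ [c,a] @ S @ [x])"
proof -
  have "wcong (x # P) (P @ [x])" by (rule wcong_pass) (use assms in auto)
  from wcong_app[OF this, of "[]" "[c,a] @ S"]
  have "wcong (x # P @ [c,a] @ S) (P @ [x,c,a] @ S)" by simp
  also have "wcong [x,c,a] [c,a,x]" by (rule wcong_rel) (use assms in auto)
  from wcong_app[OF this, of P S] have "wcong (P @ [x,c,a] @ S) (P @ [c,a,x] @ S)" by simp
  also have "wcong (x # S) (S @ [x])" by (rule wcong_pass) (use assms in auto)
  from wcong_app[OF this, of "P @ [c,a]" "[]"]
  have "wcong (P @ [c,a,x] @ S) (P @ [c,a] @ S @ [x])" by simp
  finally show ?thesis .
qed

lemma wcong_commute_lists:
  "(\<forall>x\<in>set X. wcong (x # Y) (Y @ [x])) \<Longrightarrow> wcong (X @ Y) (Y @ X)"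
proof (induction X)
  case Nil then show ?case by (simp add: wcong_refl)
next
  case (Cons x X)
  have "wcong (X @ Y) (Y @ X)" using Cons by auto
  from wcong_app[OF this, of "[x]" "[]"] have "wcong (x # X @ Y) (x # Y @ X)" by simp
  also have "wcong (x # Y) (Y @ [x])" using Cons by auto
  from wcong_app[OF this, of "[]" X] have "wcong (x # Y @ X) (Y @ x # X)" by simp
  finally show ?case by simp
qed

lemma wcong_perm:
  "distinct v \<Longrightarrow> distinct v' \<Longrightarrow> set v = set v' \<Longrightarrow>
   (\<forall>a\<in>set v. \<forall>b\<in>set v. a \<noteq> b \<longrightarrow> scmp a b) \<Longrightarrow> wcong v v'"
proof (induction v' arbitrary: v)
  case Nil then show ?case by (simp add: wcong_refl)
next
  case (Cons x r)
  have "x \<in> set v" using Cons.prems by auto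
  then obtain p q where v: "v = p @ x # q" by (meson split_list)
  have xp: "x \<notin> set p" using Cons.prems(1) v by auto
  have "wcong (x # p) (p @ [x])" by (rule wcong_pass) (use Cons.prems v xp in auto)
  from wcong_app[OF wcong_sym[OF this], of "[]" q] have 1: "wcong v (x # p @ q)" using v by simp
  have "wcong (p @ q) r"
  proof (rule Cons.IH)
    show "distinct (p @ q)" using Cons.prems(1) v by auto
    show "distinct r" using Cons.prems(2) by auto
    show "set (p @ q) = set r" using Cons.prems(1-3) v by auto
    show "\<forall>a\<in>set (p @ q). \<forall>b\<in>set (p @ q). a \<noteq> b \<longrightarrow> scmp a b" using Cons.prems(4) v by auto
  qed
  from wcong_app[OF this, of "[x]" "[]"] have "wcong (x # p @ q) (x # r)" by simp
  with 1 show ?case by (rule wcong_trans)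
qed

lemma chain_scmp: "is_chain C \<Longrightarrow> a \<in> C \<Longrightarrow> b \<in> C \<Longrightarrow> a \<noteq> b \<Longrightarrow> scmp a b"
  unfolding is_chain_def scmp_def using order.order_iff_strict by blast

lemma chain_max: "finite C \<Longrightarrow> C \<noteq> {} \<Longrightarrow> is_chain C \<Longrightarrow> \<exists>m\<in>C. \<forall>z\<in>C. z \<le> m"
proof (induction C rule: finite_ne_induct)
  case (singleton x) then show ?case by simp
next
  case (insert x F)
  then have "is_chain F" unfolding is_chain_def by blast
  with insert obtain m where m: "m \<in> F" "\<forall>z\<in>F. z \<le> m" by blast
  have "x \<le> m \<or> m \<le> x" using insert.prems m(1) unfolding is_chain_def by blast
  then show ?case
  proof
    assume "x \<le> m" then show ?thesis using m by auto
  next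
    assume "m \<le> x" then show ?thesis using m by (auto intro: order_trans)
  qed
qed

lemma chain_min: "finite C \<Longrightarrow> C \<noteq> {} \<Longrightarrow> is_chain C \<Longrightarrow> \<exists>m\<in>C. \<forall>z\<in>C. m \<le> z"
proof (induction C rule: finite_ne_induct)
  case (singleton x) then show ?case by simp
next
  case (insert x F)
  then have "is_chain F" unfolding is_chain_def by blast
  with insert obtain m where m: "m \<in> F" "\<forall>z\<in>F. m \<le> z" by blast
  have "x \<le> m \<or> m \<le> x" using insert.prems m(1) unfolding is_chain_def by blast
  then show ?case
  proof
    assume "m \<le> x" then show ?thesis using m by auto
  next
    assume "x \<le> m" then show ?thesis using m by (auto intro: order_trans)
  qed
qed

lemma chain_subset: "is_chain C \<Longrightarrow> D \<subseteq> C \<Longrightarrow> is_chain D"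
  unfolding is_chain_def by blast

lemma exists_sorted:
  "finite C \<Longrightarrow> is_chain C \<Longrightarrow> \<exists>w. set w = C \<and> sorted_wrt (\<lambda>x y. y < x) w"
proof (induction "card C" arbitrary: C)
  case 0 then show ?case by auto
next
  case (Suc n)
  then have "C \<noteq> {}" by auto
  then obtain m where m: "m \<in> C" "\<forall>z\<in>C. z \<le> m" using chain_max Suc.prems by blast
  have "n = card (C - {m})" using Suc m by auto
  moreover have "is_chain (C - {m})" using Suc.prems chain_subset by blast
  ultimately obtain w where w: "set w = C - {m}" "sorted_wrt (\<lambda>x y. y < x) w"
    using Suc by blast
  have "set (m # w) = C" using w m by auto
  moreover have "sorted_wrt (\<lambda>x y. y < x) (m # w)"
    using w m by (auto simp: order.order_iff_strict)
  ultimately show ?case by blast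
qed

lemma sorted_unique:
  "sorted_wrt (\<lambda>x y. y < x) w \<Longrightarrow> sorted_wrt (\<lambda>x y. y < x) v \<Longrightarrow> set w = set v \<Longrightarrow> w = (v::'a::order list)"
proof (induction w arbitrary: v)
  case Nil then show ?case by simp
next
  case (Cons a w)
  then obtain b v' where v: "v = b # v'" by (cases v) auto
  have "a = b"
  proof (rule ccontr)
    assume "a \<noteq> b"
    then have "a \<in> set v'" "b \<in> set w" using Cons.prems v by auto
    then have "a < b" "b < a" using Cons.prems v by auto
    then show False by simp
  qed
  moreover have "set w = set v'"
  proof -
    have "a \<notin> set w" using Cons.prems(1) by auto
    moreover have "b \<notin> set v'" using Cons.prems(2) v by auto
    ultimately show ?thesis using Cons.prems(3) v \<open>a = b\<close> by auto
  qed
  ultimately show ?case using Cons v by auto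
qed

lemma sorted_distinct: "sorted_wrt (\<lambda>x y. y < x) w \<Longrightarrow> distinct (w::'a::order list)"
  by (induction w) auto

lemma chain_word:
  assumes "finite C" "is_chain C"
  shows "set (chain_word C) = C" "sorted_wrt (\<lambda>x y. y < x) (chain_word C)" "distinct (chain_word C)"
proof -
  obtain w where w: "set w = C" "sorted_wrt (\<lambda>x y. y < x) w" using exists_sorted assms by blast
  have "chain_word C = w"
    unfolding chain_word_def
  proof (rule the_equality)
    show "set w = C \<and> sorted_wrt (\<lambda>x y. y < x) w" using w by simp
  next
    fix w' assume "set w' = C \<and> sorted_wrt (\<lambda>x y. y < x) w'"
    then show "w' = w" using sorted_unique[of w' w] w by simp
  qed
  then show "set (chain_word C) = C" "sorted_wrt (\<lambda>x y. y < x) (chain_word C)" "distinct (chain_word C)"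
    using w sorted_distinct by auto
qed

lemma decomp:
  "sorted_wrt (\<lambda>x y. y < x) w \<Longrightarrow> c \<in> set w \<Longrightarrow> a \<in> set w \<Longrightarrow> a < c \<Longrightarrow>
   (\<forall>z\<in>set w. z < c \<longrightarrow> z \<le> a) \<Longrightarrow> \<exists>P S. w = P @ [c, (a::'a::order)] @ S"
proof (induction w)
  case Nil then show ?case by simp
next
  case (Cons h t)
  show ?case
  proof (cases "h = c")
    case True
    then have "a \<in> set t" using Cons.prems by auto
    then obtain h' t' where t: "t = h' # t'" by (cases t) auto
    have "h' < c" using Cons.prems(1) t True by auto
    then have "h' \<le> a" using Cons.prems(5) t by auto
    moreover have "a = h' \<or> a < h'" using Cons.prems(1) \<open>a \<in> set t\<close> t by auto
    ultimately have "a = h'" by auto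
    then have "h # t = [] @ [c,a] @ t'" using True t by simp
    then show ?thesis by blast
  next
    case False
    then have "c \<in> set t" using Cons.prems by auto
    moreover have "a \<noteq> h"
    proof
      assume "a = h"
      then have "c < a" using Cons.prems(1) \<open>c \<in> set t\<close> by auto
      then show False using Cons.prems(4) by simp
    qed
    then have "a \<in> set t" using Cons.prems by auto
    ultimately obtain P S where "t = P @ [c,a] @ S" using Cons by auto
    then have "h # t = (h # P) @ [c,a] @ S" by simp
    then show ?thesis by blast
  qed
qed




definition Conn :: "'a::order set \<Rightarrow> 'a set \<Rightarrow> bool" where
  "Conn H1 H2 \<longleftrightarrow> (\<forall>S1 S2. S1 \<subseteq> H1 \<and> S2 \<subseteq> H2 \<and>
     (\<forall>x\<in>H1. \<forall>y\<in>H2. sim x y \<longrightarrow> (x \<in> S1 \<longleftrightarrow> y \<in> S2)) \<longrightarrow>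
     (S1 = {} \<and> S2 = {}) \<or> (S1 = H1 \<and> S2 = H2))"

lemma sim_sym: "sim x y \<Longrightarrow> sim y x"
  unfolding sim_def by blast

lemma Conn_sym: "Conn H1 H2 \<Longrightarrow> Conn H2 H1"
  unfolding Conn_def
proof (intro allI impI)
  fix S1 S2
  assume h: "\<forall>S1 S2. S1 \<subseteq> H1 \<and> S2 \<subseteq> H2 \<and>
     (\<forall>x\<in>H1. \<forall>y\<in>H2. sim x y \<longrightarrow> (x \<in> S1 \<longleftrightarrow> y \<in> S2)) \<longrightarrow>
     (S1 = {} \<and> S2 = {}) \<or> (S1 = H1 \<and> S2 = H2)"
    and a: "S1 \<subseteq> H2 \<and> S2 \<subseteq> H1 \<and> (\<forall>x\<in>H2. \<forall>y\<in>H1. sim x y \<longrightarrow> (x \<in> S1 \<longleftrightarrow> y \<in> S2))"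
  have "\<forall>x\<in>H1. \<forall>y\<in>H2. sim x y \<longrightarrow> (x \<in> S2 \<longleftrightarrow> y \<in> S1)"
  proof (intro ballI impI)
    fix x y assume "x \<in> H1" "y \<in> H2" "sim x y"
    then show "x \<in> S2 \<longleftrightarrow> y \<in> S1" using a sim_sym[of x y] by blast
  qed
  then have "(S2 = {} \<and> S1 = {}) \<or> (S2 = H1 \<and> S1 = H2)" using h a by blast
  then show "(S1 = {} \<and> S2 = {}) \<or> (S1 = H2 \<and> S2 = H1)" by blast
qed

lemma not_sim_scmp: "\<not> sim x y \<Longrightarrow> scmp x y"
  unfolding sim_def scmp_def by blast

lemma convex: "a \<le> b \<Longrightarrow> b \<le> c \<Longrightarrow> sim x a \<Longrightarrow> sim x c \<Longrightarrow> sim x (b::'a::order)"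
  unfolding sim_def by (meson order_less_le_trans order_le_less_trans)

lemma tof: "three_one_free TYPE('a::order) \<Longrightarrow> (a::'a) < b \<Longrightarrow> b < c \<Longrightarrow>
   incomp d a \<Longrightarrow> incomp d b \<Longrightarrow> incomp d c \<Longrightarrow> False"
  unfolding three_one_free_def by blast

lemma sim_incomp: "sim x a \<Longrightarrow> x \<noteq> a \<Longrightarrow> incomp x a"
  unfolding sim_def incomp_def using order.order_iff_strict by blast

lemma incomp_sym: "incomp x a \<Longrightarrow> incomp a x"
  unfolding incomp_def by blast

lemma three:
  assumes "three_one_free TYPE('a::order)" "is_chain C"
    "a \<in> C" "b \<in> C" "c \<in> C" "a \<noteq> b" "a \<noteq> c" "b \<noteq> c"
    "sim x a" "sim x b" "sim (x::'a) c"
  shows False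
proof -
  have xa: "x \<noteq> a"
  proof
    assume "x = a" then have "scmp x b" using chain_scmp[OF assms(2)] assms by auto
    then show False using assms(10) unfolding sim_def scmp_def by blast
  qed
  have xb: "x \<noteq> b"
  proof
    assume "x = b" then have "scmp x a" using chain_scmp[OF assms(2)] assms by auto
    then show False using assms(9) unfolding sim_def scmp_def by blast
  qed
  have xc: "x \<noteq> c"
  proof
    assume "x = c" then have "scmp x a" using chain_scmp[OF assms(2)] assms by auto
    then show False using assms(9) unfolding sim_def scmp_def by blast
  qed
  have i: "incomp x a" "incomp x b" "incomp x c"
    using sim_incomp assms xa xb xc by auto
  have "scmp a b" "scmp a c" "scmp b c" using chain_scmp[OF assms(2)] assms by auto
  then have "(a<b \<and> b<c) \<or> (a<c \<and> c<b) \<or> (b<a \<and> a<c) \<or> (b<c \<and> c<a) \<or> (c<a \<and> a<b) \<or> (c<b \<and> b<a)"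
    unfolding scmp_def using order.strict_trans[of a b c] order.strict_trans[of b c a] order.strict_trans[of c a b] order.strict_trans[of a c b] order.strict_trans[of c b a] order.strict_trans[of b a c] by auto
  then show False
  proof (elim disjE conjE)
    assume "a < b" "b < c" then show False using tof[OF assms(1) _ _ i(1) i(2) i(3)] by blast
  next
    assume "a < c" "c < b" then show False using tof[OF assms(1) _ _ i(1) i(3) i(2)] by blast
  next
    assume "b < a" "a < c" then show False using tof[OF assms(1) _ _ i(2) i(1) i(3)] by blast
  next
    assume "b < c" "c < a" then show False using tof[OF assms(1) _ _ i(2) i(3) i(1)] by blast
  next
    assume "c < a" "a < b" then show False using tof[OF assms(1) _ _ i(3) i(1) i(2)] by blast
  next
    assume "c < b" "b < a" then show False using tof[OF assms(1) _ _ i(3) i(2) i(1)] by blast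
  qed
qed

lemma ConnD: "Conn H1 H2 \<Longrightarrow> S1 \<subseteq> H1 \<Longrightarrow> S2 \<subseteq> H2 \<Longrightarrow>
     (\<forall>x\<in>H1. \<forall>y\<in>H2. sim x y \<longrightarrow> (x \<in> S1 \<longleftrightarrow> y \<in> S2)) \<Longrightarrow>
     (S1 = {} \<and> S2 = {}) \<or> (S1 = H1 \<and> S2 = H2)"
  unfolding Conn_def by blast

lemma core_Q:
  fixes H1 H2 :: "'a::{finite,order} set"
  assumes "Conn H1 H2" "is_chain H2" "y \<in> H2" "\<exists>z\<in>H2. z < y"
  shows "\<exists>x\<in>H1. \<exists>p\<in>H2. p < y \<and> (\<forall>z\<in>H2. z < y \<longrightarrow> z \<le> p) \<and> sim x p \<and> sim x y"
proof -
  have ch: "is_chain {z\<in>H2. z < y}" by (rule chain_subset[OF assms(2)]) blast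
  have ne: "{z\<in>H2. z < y} \<noteq> {}" using assms(4) by blast
  have fin: "finite {z\<in>H2. z < y}" by simp
  obtain p where "p \<in> {z\<in>H2. z < y}" "\<forall>z\<in>{z\<in>H2. z < y}. z \<le> p"
    using chain_max[OF fin ne ch] by blast
  then have p: "p \<in> H2" "p < y" "\<forall>z\<in>H2. z < y \<longrightarrow> z \<le> p" by auto
  show ?thesis
  proof (rule ccontr)
    assume no: "\<not> ?thesis"
    have no': "\<And>x. x \<in> H1 \<Longrightarrow> sim x p \<Longrightarrow> sim x y \<Longrightarrow> False"
    proof -
      fix x assume "x \<in> H1" "sim x p" "sim x y"
      then have "\<exists>x\<in>H1. \<exists>p\<in>H2. p < y \<and> (\<forall>z\<in>H2. z < y \<longrightarrow> z \<le> p) \<and> sim x p \<and> sim x y"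
        using p by blast
      then show False using no by blast
    qed
    define S2 where "S2 = {z\<in>H2. z \<le> p}"
    define S1 where "S1 = {x\<in>H1. \<exists>z\<in>H2. z \<le> p \<and> sim x z}"
    have cl: "\<forall>x\<in>H1. \<forall>z\<in>H2. sim x z \<longrightarrow> (x \<in> S1 \<longleftrightarrow> z \<in> S2)"
    proof (intro ballI impI)
      fix x z assume xz: "x \<in> H1" "z \<in> H2" "sim x z"
      show "x \<in> S1 \<longleftrightarrow> z \<in> S2"
      proof
        assume "z \<in> S2" then show "x \<in> S1" using xz unfolding S1_def S2_def by blast
      next
        assume "x \<in> S1"
        then obtain z' where z': "z' \<in> H2" "z' \<le> p" "sim x z'" unfolding S1_def by blast
        show "z \<in> S2"
        proof (rule ccontr)
          assume "z \<notin> S2"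
          then have nzp: "\<not> z \<le> p" using xz unfolding S2_def by blast
          then have "p < z" using chain_scmp[OF assms(2) p(1) xz(2)] unfolding scmp_def by (metis less_imp_le order_refl)
          have "y \<le> z"
          proof (cases "z = y")
            case False
            then have "z < y \<or> y < z" using chain_scmp[OF assms(2) xz(2) assms(3)] unfolding scmp_def by auto
            then show ?thesis using p(3) xz(2) nzp by auto
          qed simp
          have "sim x p" using convex[OF z'(2) _ z'(3) xz(3)] \<open>p < z\<close> by simp
          moreover have "sim x y" using convex[OF _ \<open>y \<le> z\<close> z'(3) xz(3)] z'(2) p(2) by simp
          ultimately show False using no' xz(1) by blast
        qed
      qed
    qed
    have "S1 \<subseteq> H1" "S2 \<subseteq> H2" unfolding S1_def S2_def by auto
    then have "(S1 = {} \<and> S2 = {}) \<or> (S1 = H1 \<and> S2 = H2)"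
      using ConnD[OF assms(1) _ _ cl] by blast
    moreover have "p \<in> S2" using p unfolding S2_def by simp
    moreover have "y \<notin> S2" using p(2) unfolding S2_def by auto
    ultimately show False using assms(3) by blast
  qed
qed

lemma core_deg:
  fixes H1 H2 :: "'a::{finite,order} set"
  assumes tof: "three_one_free TYPE('a)" and ch2: "is_chain H2" and conn: "Conn H1 H2"
    and lt: "card H1 < card H2" and x: "x \<in> H1"
  shows "\<exists>y\<in>H2. \<exists>p\<in>H2. p < y \<and> (\<forall>z\<in>H2. z < y \<longrightarrow> z \<le> p) \<and> sim x p \<and> sim x y"
proof -
  define Pr where "Pr y x' \<longleftrightarrow> x' \<in> H1 \<and> (\<exists>p\<in>H2. p < y \<and> (\<forall>z\<in>H2. z < y \<longrightarrow> z \<le> p) \<and> sim x' p \<and> sim x' y)" for y x'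
  have ne: "H2 \<noteq> {}" using lt by (metis card.empty not_less0)
  have fin: "finite H2" by simp
  obtain M where M: "M \<in> H2" "\<forall>z\<in>H2. M \<le> z" using chain_min[OF fin ne ch2] by blast
  have ex: "\<exists>x'. Pr y x'" if y: "y \<in> H2 - {M}" for y
  proof -
    have "M < y" using M y by (metis DiffE insertI1 order.order_iff_strict)
    then have "\<exists>z\<in>H2. z < y" using M by blast
    then have "\<exists>x\<in>H1. \<exists>p\<in>H2. p < y \<and> (\<forall>z\<in>H2. z < y \<longrightarrow> z \<le> p) \<and> sim x p \<and> sim x y"
      using core_Q[OF conn ch2] y by blast
    then show ?thesis unfolding Pr_def by blast
  qed
  define g where "g y = (SOME x'. Pr y x')" for y
  have gP: "Pr y (g y)" if "y \<in> H2 - {M}" for y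
    unfolding g_def using ex[OF that] by (rule someI_ex)
  have inj: "inj_on g (H2 - {M})"
  proof (rule inj_onI)
    fix y y' assume y: "y \<in> H2 - {M}" and y': "y' \<in> H2 - {M}" and eq: "g y = g y'"
    show "y = y'"
    proof (rule ccontr)
      assume neq: "y \<noteq> y'"
      obtain p where p: "p \<in> H2" "p < y" "sim (g y) p" "sim (g y) y" using gP[OF y] unfolding Pr_def by blast
      obtain p' where p': "p' \<in> H2" "p' < y'" "sim (g y) p'" "sim (g y) y'" using gP[OF y'] eq unfolding Pr_def by auto
      show False
      proof (cases "p = y'")
        case True
        have "p' \<noteq> y'" "p' \<noteq> y" using p'(2) True p(2) by auto
        then show False using three[OF tof ch2, of y y' p' "g y"] y y' p' p neq by auto
      next
        case False
        have "p \<noteq> y" using p(2) by auto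
        then show False using three[OF tof ch2, of y y' p "g y"] y y' p' p neq False by auto
      qed
    qed
  qed
  have sub: "g ` (H2 - {M}) \<subseteq> H1" using gP unfolding Pr_def by blast
  have "card (g ` (H2 - {M})) = card H2 - 1" using card_image[OF inj] M(1) by simp
  then have "card H1 \<le> card (g ` (H2 - {M}))" using lt by linarith
  then have "g ` (H2 - {M}) = H1" using card_seteq[OF _ sub] by simp
  then obtain y where y: "y \<in> H2 - {M}" "x = g y" using x by blast
  then have "Pr y x" using gP by simp
  then show ?thesis unfolding Pr_def using y by blast
qed

lemma core_word:
  fixes H1 H2 :: "'a::{finite,order} set"
  assumes tof: "three_one_free TYPE('a)" and ch1: "is_chain H1" and ch2: "is_chain H2"
    and conn: "Conn H1 H2" and lt: "card H1 < card H2"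
  shows "wcong (chain_word H1 @ chain_word H2) (chain_word H2 @ chain_word H1)"
proof (rule wcong_commute_lists, rule ballI)
  fix x assume "x \<in> set (chain_word H1)"
  then have x: "x \<in> H1" using chain_word(1)[OF _ ch1] by simp
  obtain y p where yp: "y \<in> H2" "p \<in> H2" "p < y" "\<forall>z\<in>H2. z < y \<longrightarrow> z \<le> p" "sim x p" "sim x y"
    using core_deg[OF tof ch2 conn lt x] by blast
  have w2: "set (chain_word H2) = H2" "sorted_wrt (\<lambda>x y. y < x) (chain_word H2)" "distinct (chain_word H2)"
    using chain_word[OF _ ch2] by auto
  obtain P S where PS: "chain_word H2 = P @ [y, p] @ S"
    using decomp[OF w2(2), of y p] w2(1) yp by blast
  have cmp: "\<forall>z\<in>set P \<union> set S. scmp x z"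
  proof
    fix z assume z: "z \<in> set P \<union> set S"
    have "z \<noteq> y" "z \<noteq> p" "z \<in> H2" using z w2(3) w2(1) PS by auto
    then have "\<not> sim x z" using three[OF tof ch2, of y p z x] yp by auto
    then show "scmp x z" by (rule not_sim_scmp)
  qed
  have "wcong (x # P @ [y,p] @ S) (P @ [y,p] @ S @ [x])"
    by (rule wcong_move[OF cmp]) (use yp sim_sym in auto)
  then show "wcong (x # chain_word H2) (chain_word H2 @ [x])" using PS by simp
qed




lemma wcong_cat: "wcong u u' \<Longrightarrow> wcong v v' \<Longrightarrow> wcong (u @ v) (u' @ v')"
proof -
  assume a: "wcong u u'" and b: "wcong v v'"
  from wcong_app[OF a, of "[]" v] have "wcong (u @ v) (u' @ v)" by simp
  also from wcong_app[OF b, of u' "[]"] have "wcong (u' @ v) (u' @ v')" by simp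
  finally show ?thesis .
qed

lemma ladder_conn:
  fixes A1 A2 :: "'a::order set"
  assumes "is_ladder A1 A2 H"
  shows "Conn (left_part H) (right_part H)"
    and "\<And>x y. x \<in> A1 \<Longrightarrow> y \<in> A2 \<Longrightarrow> sim x y \<Longrightarrow> (Inl x \<in> H \<longleftrightarrow> Inr y \<in> H)"
    and "H \<subseteq> A1 <+> A2"
proof -
  let ?E = "ladder_edges A1 A2"
  obtain v where v: "v \<in> A1 <+> A2" and H: "H = {w \<in> A1 <+> A2. (v, w) \<in> ?E\<^sup>*}"
    using assms unfolding is_ladder_def by blast
  have Esub: "(w, w') \<in> ?E \<Longrightarrow> w \<in> A1 <+> A2 \<and> w' \<in> A1 <+> A2" for w w'
    unfolding ladder_edges_def by auto
  have clos: "w \<in> H \<Longrightarrow> (w, w') \<in> ?E \<Longrightarrow> w' \<in> H" for w w'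
    using H Esub by (auto intro: rtrancl_into_rtrancl)
  have edge: "x \<in> A1 \<Longrightarrow> y \<in> A2 \<Longrightarrow> sim x y \<Longrightarrow> (Inl x, Inr y) \<in> ?E \<and> (Inr y, Inl x) \<in> ?E" for x y
    unfolding ladder_edges_def by blast
  show ii: "\<And>x y. x \<in> A1 \<Longrightarrow> y \<in> A2 \<Longrightarrow> sim x y \<Longrightarrow> (Inl x \<in> H \<longleftrightarrow> Inr y \<in> H)"
    using clos edge by blast
  show "H \<subseteq> A1 <+> A2" using H by blast
  show "Conn (left_part H) (right_part H)"
    unfolding Conn_def
  proof (intro allI impI)
    fix S1 S2
    assume a: "S1 \<subseteq> left_part H \<and> S2 \<subseteq> right_part H \<and>
      (\<forall>x\<in>left_part H. \<forall>y\<in>right_part H. sim x y \<longrightarrow> (x \<in> S1 \<longleftrightarrow> y \<in> S2))"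
    define f where "f w = (case w of Inl x \<Rightarrow> x \<in> S1 | Inr y \<Rightarrow> y \<in> S2)" for w
    have vH: "v \<in> H" using H v by simp
    have inv: "(v, w) \<in> ?E\<^sup>* \<Longrightarrow> f w = f v" for w
    proof (induction rule: rtrancl_induct)
      case base then show ?case by simp
    next
      case (step w w')
      have wH: "w \<in> H" using H step.hyps Esub by blast
      have w'H: "w' \<in> H" using clos[OF wH step.hyps(2)] .
      have "f w' = f w"
        using step.hyps(2) unfolding ladder_edges_def
      proof (elim UnE CollectE exE conjE)
        fix x y assume e: "(w, w') = (Inl x, Inr y)" "x \<in> A1" "y \<in> A2" "sim x y"
        then have "x \<in> left_part H" "y \<in> right_part H" using wH w'H unfolding left_part_def right_part_def by auto
        then show ?thesis using a e unfolding f_def by auto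
      next
        fix x y assume e: "(w, w') = (Inr y, Inl x)" "x \<in> A1" "y \<in> A2" "sim x y"
        then have "x \<in> left_part H" "y \<in> right_part H" using wH w'H unfolding left_part_def right_part_def by auto
        then show ?thesis using a e unfolding f_def by auto
      qed
      then show ?case using step.IH by simp
    qed
    have allH: "w \<in> H \<Longrightarrow> f w = f v" for w using inv H by blast
    show "(S1 = {} \<and> S2 = {}) \<or> (S1 = left_part H \<and> S2 = right_part H)"
    proof (cases "f v")
      case True
      have "left_part H \<subseteq> S1"
      proof
        fix x assume "x \<in> left_part H"
        then have "f (Inl x) = f v" using allH unfolding left_part_def by blast
        then show "x \<in> S1" using True unfolding f_def by simp
      qed
      moreover have "right_part H \<subseteq> S2"
      proof
        fix x assume "x \<in> right_part H"
        then have "f (Inr x) = f v" using allH unfolding right_part_def by blast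
        then show "x \<in> S2" using True unfolding f_def by simp
      qed
      ultimately show ?thesis using a by blast
    next
      case False
      have "S1 = {}"
      proof -
        { fix x assume "x \<in> S1"
          then have "x \<in> left_part H" using a by blast
          then have "f (Inl x) = f v" using allH unfolding left_part_def by blast
          then have False using False \<open>x \<in> S1\<close> unfolding f_def by simp }
        then show ?thesis by blast
      qed
      moreover have "S2 = {}"
      proof -
        { fix x assume "x \<in> S2"
          then have "x \<in> right_part H" using a by blast
          then have "f (Inr x) = f v" using allH unfolding right_part_def by blast
          then have False using False \<open>x \<in> S2\<close> unfolding f_def by simp }
        then show ?thesis by blast
      qed
      ultimately show ?thesis by blast
    qed
  qed
qed

theorem mainTheorem19:
  fixes A1 A2 :: "('a::{finite,order}) set" and H :: "('a + 'a) set"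
  assumes "three_one_free TYPE('a)"
    and "is_chain A1" and "is_chain A2"
    and "is_ladder A1 A2 H"
    and "unbalanced H"
  shows "ncmult (uC A1) (uC A2) - ncmult (uC (swap1 A1 A2 H)) (uC (swap2 A1 A2 H)) \<in> IPH"
proof -
  note tof = assms(1) and ch1 = assms(2) and ch2 = assms(3)
  define H1 where "H1 = left_part H"
  define H2 where "H2 = right_part H"
  define D1 where "D1 = A1 - H1"
  define D2 where "D2 = A2 - H2"
  have conn: "Conn H1 H2" using ladder_conn(1)[OF assms(4)] unfolding H1_def H2_def .
  have iff: "\<And>x y. x \<in> A1 \<Longrightarrow> y \<in> A2 \<Longrightarrow> sim x y \<Longrightarrow> (Inl x \<in> H \<longleftrightarrow> Inr y \<in> H)"
    using ladder_conn(2)[OF assms(4)] by blast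
  have Hs: "H \<subseteq> A1 <+> A2" using ladder_conn(3)[OF assms(4)] .
  have H1A: "H1 \<subseteq> A1" using Hs unfolding H1_def left_part_def by blast
  have H2A: "H2 \<subseteq> A2" using Hs unfolding H2_def right_part_def by blast
  have c1: "is_chain H1" using chain_subset[OF ch1 H1A] .
  have c2: "is_chain H2" using chain_subset[OF ch2 H2A] .
  have nsim1: "\<not> sim x y" if "x \<in> D1" "y \<in> H2" for x y
  proof
    assume "sim x y"
    then have "Inl x \<in> H" using iff[of x y] that H2A unfolding D1_def H2_def right_part_def by blast
    then show False using that unfolding D1_def H1_def left_part_def by blast
  qed
  have nsim2: "\<not> sim x y" if "x \<in> H1" "y \<in> D2" for x y
  proof
    assume "sim x y"
    then have "Inr y \<in> H" using iff[of x y] that H1A unfolding D2_def H1_def left_part_def by blast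
    then show False using that unfolding D2_def H2_def right_part_def by blast
  qed
  have simrefl: "sim x x" for x :: 'a unfolding sim_def by simp
  have disj1: "D1 \<inter> H2 = {}" using nsim1 simrefl by blast
  have disj2: "H1 \<inter> D2 = {}" using nsim2 simrefl by blast
  have sw1: "swap1 A1 A2 H = D1 \<union> H2" unfolding swap1_def D1_def H1_def H2_def by simp
  have sw2: "swap2 A1 A2 H = D2 \<union> H1" unfolding swap2_def D2_def H1_def H2_def by simp
  have cD1: "is_chain D1" using chain_subset[OF ch1] unfolding D1_def by blast
  have cD2: "is_chain D2" using chain_subset[OF ch2] unfolding D2_def by blast
  have le_of_scmp: "scmp x y \<Longrightarrow> x \<le> y \<or> y \<le> x" for x y :: 'a unfolding scmp_def by auto
  have cA1': "is_chain (D1 \<union> H2)"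
    unfolding is_chain_def
  proof (intro ballI)
    fix x y assume "x \<in> D1 \<union> H2" "y \<in> D1 \<union> H2"
    then consider "x \<in> D1" "y \<in> D1" | "x \<in> D1" "y \<in> H2" | "x \<in> H2" "y \<in> D1" | "x \<in> H2" "y \<in> H2" by blast
    then show "x \<le> y \<or> y \<le> x"
    proof cases
      case 1 then show ?thesis using cD1 unfolding is_chain_def by blast
    next
      case 2 then show ?thesis using le_of_scmp not_sim_scmp nsim1 by blast
    next
      case 3 then show ?thesis using le_of_scmp not_sim_scmp nsim1 by blast
    next
      case 4 then show ?thesis using c2 unfolding is_chain_def by blast
    qed
  qed
  have cA2': "is_chain (D2 \<union> H1)"
    unfolding is_chain_def
  proof (intro ballI)
    fix x y assume "x \<in> D2 \<union> H1" "y \<in> D2 \<union> H1"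
    then consider "x \<in> D2" "y \<in> D2" | "x \<in> D2" "y \<in> H1" | "x \<in> H1" "y \<in> D2" | "x \<in> H1" "y \<in> H1" by blast
    then show "x \<le> y \<or> y \<le> x"
    proof cases
      case 1 then show ?thesis using cD2 unfolding is_chain_def by blast
    next
      case 2 then show ?thesis using le_of_scmp not_sim_scmp nsim2 by blast
    next
      case 3 then show ?thesis using le_of_scmp not_sim_scmp nsim2 by blast
    next
      case 4 then show ?thesis using c1 unfolding is_chain_def by blast
    qed
  qed
  have chs: "\<forall>a\<in>C. \<forall>b\<in>C. a \<noteq> b \<longrightarrow> scmp a b" if "is_chain C" for C :: "'a set"
    using chain_scmp[OF that] by blast
  note cw = chain_word[OF finite]
  have e1: "wcong (chain_word A1) (chain_word D1 @ chain_word H1)"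
    by (rule wcong_perm) (use cw[OF ch1] cw[OF cD1] cw[OF c1] chs[OF ch1] H1A in \<open>auto simp: D1_def\<close>)
  have e2: "wcong (chain_word A2) (chain_word H2 @ chain_word D2)"
    by (rule wcong_perm) (use cw[OF ch2] cw[OF cD2] cw[OF c2] chs[OF ch2] H2A in \<open>auto simp: D2_def\<close>)
  have e3: "wcong (chain_word (D1 \<union> H2)) (chain_word D1 @ chain_word H2)"
    by (rule wcong_perm) (use cw[OF cA1'] cw[OF cD1] cw[OF c2] chs[OF cA1'] disj1 in auto)
  have e4: "wcong (chain_word (D2 \<union> H1)) (chain_word H1 @ chain_word D2)"
    by (rule wcong_perm) (use cw[OF cA2'] cw[OF cD2] cw[OF c1] chs[OF cA2'] disj2 in auto)
  have core: "wcong (chain_word H1 @ chain_word H2) (chain_word H2 @ chain_word H1)"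
  proof -
    have "card H1 \<noteq> card H2" using assms(5) unfolding unbalanced_def H1_def H2_def .
    then consider "card H1 < card H2" | "card H2 < card H1" by linarith
    then show ?thesis
    proof cases
      case 1 then show ?thesis using core_word[OF tof c1 c2 conn] by blast
    next
      case 2 then show ?thesis using core_word[OF tof c2 c1 Conn_sym[OF conn]] wcong_sym by blast
    qed
  qed
  have "wcong (chain_word A1 @ chain_word A2) (chain_word D1 @ (chain_word H1 @ chain_word H2) @ chain_word D2)"
    using wcong_cat[OF e1 e2] by simp
  also have "wcong (chain_word D1 @ (chain_word H1 @ chain_word H2) @ chain_word D2)
                   (chain_word D1 @ (chain_word H2 @ chain_word H1) @ chain_word D2)"
    by (rule wcong_app[OF core])
  also have "wcong (chain_word D1 @ (chain_word H2 @ chain_word H1) @ chain_word D2)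
                   (chain_word (D1 \<union> H2) @ chain_word (D2 \<union> H1))"
    using wcong_cat[OF wcong_sym[OF e3] wcong_sym[OF e4]] by simp
  finally have "wcong (chain_word A1 @ chain_word A2) (chain_word (D1 \<union> H2) @ chain_word (D2 \<union> H1))" .
  then have "mon (chain_word A1 @ chain_word A2) - mon (chain_word (D1 \<union> H2) @ chain_word (D2 \<union> H1)) \<in> IPH"
    by (rule wcong_IPH)
  then show ?thesis unfolding uC_def sw1 sw2 by (simp add: ncmult_mon)
qed


end
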